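(* Let $a,b,c,d\in\mathbb C$ with $a\notin\mathbb Z$ and $d\notin\{0,-1,-2,\dots\}$. Then, as an identity of formal power series in $x,y$, $$\mathrm H_2(a,b,c;d;x,y)=F(a,b;d;x)\,{}_1F_1(c;1-a;-y)+\sum_{k=1}^\infty\sum_{l=1}^k\frac{(-1)^{k+l}(k-1)!}{(l-1)!\,l!\,(k-l)!}\,\frac{(b)_k(c)_l}{(1-a)_l(d)_k}\,x^ky^l\,F(a+k,b+k;d+k;x)\,{}_1F_1(c+l;1-a+l;-y).$$
   Context: Pochhammer symbol: $(\lambda)_k=\Gamma(\lambda+k)/\Gamma(\lambda)$ for every integer $k$ (possibly negative) whenever defined; $(\lambda)_0=1$. $F(a,b;c;x)=\sum_{k\ge0}\frac{(a)_k(b)_k}{(c)_k k!}x^k$, ${}_1F_1(a;c;x)=\sum_{k\ge0}\frac{(a)_k}{(c)_k k!}x^k$. Confluent Horn function $\mathrm H_2(a,b,c;d;x,y)=\sum_{p,q\ge0}\frac{(a)_{p-q}(b)_p(c)_q}{(d)_p\,p!\,q!}x^py^q$. All functions are regarded as formal power series in $x,y$; the infinite double sum converges in the formal (degree) topology. *)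

theory Defs
  imports Complex_Main "HOL-Computational_Algebra.Formal_Power_Series" "HOL-Library.Nonpos_Ints"
begin

text \<open>Pochhammer symbol with integer index: for k >= 0 the usual rising factorial,
  for k = -m < 0 it is Gamma(lam - m)/Gamma(lam) = 1 / ((lam-m)(lam-m+1)...(lam-1)).\<close>
definition poch_int :: "complex \<Rightarrow> int \<Rightarrow> complex" where
  "poch_int lam k = (if 0 \<le> k then pochhammer lam (nat k)
                     else inverse (pochhammer (lam + of_int k) (nat (- k))))"

definition hyp2F1 :: "complex \<Rightarrow> complex \<Rightarrow> complex \<Rightarrow> complex fps" where
  "hyp2F1 a b c = Abs_fps (\<lambda>k. pochhammer a k * pochhammer b k / (pochhammer c k * fact k))"

definition hyp1F1 :: "complex \<Rightarrow> complex \<Rightarrow> complex fps" where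
  "hyp1F1 a c = Abs_fps (\<lambda>k. pochhammer a k / (pochhammer c k * fact k))"

text \<open>Formal power series in two variables x, y are modelled as (complex fps) fps:
  the outer variable is x, the inner (coefficient) variable is y.\<close>

definition fps_in_x :: "complex fps \<Rightarrow> complex fps fps" where
  "fps_in_x f = Abs_fps (\<lambda>p. fps_const (fps_nth f p))"

definition fps_in_y :: "complex fps \<Rightarrow> complex fps fps" where
  "fps_in_y g = fps_const g"

abbreviation X2 :: "complex fps fps" where "X2 \<equiv> fps_X"
abbreviation Y2 :: "complex fps fps" where "Y2 \<equiv> fps_const fps_X"

abbreviation const2 :: "complex \<Rightarrow> complex fps fps" where
  "const2 r \<equiv> fps_const (fps_const r)"

definition H2 :: "complex \<Rightarrow> complex \<Rightarrow> complex \<Rightarrow> complex \<Rightarrow> complex fps fps" where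
  "H2 a b c d = Abs_fps (\<lambda>p. Abs_fps (\<lambda>q.
      poch_int a (int p - int q) * pochhammer b p * pochhammer c q
        / (pochhammer d p * fact p * fact q)))"

end

theory Submission
  imports Defs
begin


lemma vand_nat:
  assumes "K \<ge> 1"
  shows "(\<Sum>l=1..K. ((K-1) choose (l-1)) * (q choose l)) = (K - 1 + q) choose K"
proof -
  have "(K - 1 + q) choose K = (\<Sum>i\<le>K. ((K-1) choose i) * (q choose (K - i)))"
    by (rule vandermonde[symmetric])
  also have "\<dots> = (\<Sum>i<K. ((K-1) choose i) * (q choose (K - i)))"
    using assms by (simp add: lessThan_Suc_atMost[symmetric])
  also have "\<dots> = (\<Sum>l=1..K. ((K-1) choose (l-1)) * (q choose l))"
  proof (rule sum.reindex_bij_witness[symmetric, where i="\<lambda>l. K - l" and j = "\<lambda>i. K - i"])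
    fix l assume l: "l \<in> {1..K}"
    have "(K-1) choose (K - l) = (K - 1) choose ((K-1) - (K - l))"
      using l by (intro binomial_symmetric) auto
    moreover have "(K-1) - (K - l) = l - 1" using l by auto
    ultimately show "((K-1) choose (K - l)) * (q choose (K - (K - l))) = ((K-1) choose (l-1)) * (q choose l)"
      using l by simp
  qed auto
  finally show ?thesis ..
qed




lemma poch_nat_binom:
  "pochhammer (of_nat q :: complex) (Suc k) / fact (Suc k) = of_nat ((k + q) choose (Suc k))"
proof -
  have "of_nat ((k + q) choose (Suc k)) = (of_nat (k+q) gchoose (Suc k) :: complex)"
    by (rule binomial_gbinomial)
  also have "\<dots> = pochhammer (of_nat (k+q) - of_nat (Suc k) + 1) (Suc k) / fact (Suc k)"
    by (rule gbinomial_pochhammer')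
  also have "of_nat (k+q) - of_nat (Suc k) + 1 = (of_nat q :: complex)" by simp
  finally show ?thesis by simp
qed

lemma step2:
  "(\<Sum>l=1..Suc k. if l \<le> q then fact k / (fact (l-1) * fact l * fact (Suc k - l) * fact (q-l)) else 0 :: complex)
   = pochhammer (of_nat q) (Suc k) / (fact (Suc k) * fact q)"
proof -
  have "(\<Sum>l=1..Suc k. if l \<le> q then fact k / (fact (l-1) * fact l * fact (Suc k - l) * fact (q-l)) else 0 :: complex)
     = (\<Sum>l=1..Suc k. of_nat ((k choose (l-1)) * (q choose l)) / fact q)"
  proof (rule sum.cong[OF refl])
    fix l assume l: "l \<in> {1..Suc k}"
    show "(if l \<le> q then fact k / (fact (l-1) * fact l * fact (Suc k - l) * fact (q-l)) else 0 :: complex)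
      = of_nat ((k choose (l-1)) * (q choose l)) / fact q"
    proof (cases "l \<le> q")
      case True
      have e1: "(of_nat (k choose (l-1)) :: complex) = fact k / (fact (l-1) * fact (k - (l-1)))"
        using l by (intro binomial_fact) auto
      have e2: "(of_nat (q choose l) :: complex) = fact q / (fact l * fact (q - l))"
        using True by (intro binomial_fact) auto
      have e3: "k - (l-1) = Suc k - l" using l by auto
      show ?thesis using True unfolding of_nat_mult e1 e2 e3 by (simp add: field_simps)
    qed simp
  qed
  also have "\<dots> = of_nat (\<Sum>l=1..Suc k. (k choose (l-1)) * (q choose l)) / fact q"
    unfolding of_nat_sum sum_divide_distrib ..
  also have "(\<Sum>l=1..Suc k. (k choose (l-1)) * (q choose l)) = (k + q) choose (Suc k)"
    using vand_nat[of "Suc k" q] by simp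
  also have "(of_nat ((k + q) choose (Suc k)) :: complex) = pochhammer (of_nat q) (Suc k) / fact (Suc k)"
    by (rule poch_nat_binom[symmetric])
  finally show ?thesis by simp
qed




lemma poch_neg_nat:
  assumes "k \<le> p"
  shows "pochhammer (- of_nat p :: complex) k = (-1)^k * fact p / fact (p - k)"
proof -
  have "pochhammer (- of_nat p :: complex) k = (-1)^k * pochhammer (of_nat p - of_nat k + 1) k"
    by (rule pochhammer_minus)
  moreover have "(of_nat p - of_nat k + 1 :: complex) = 1 + of_nat (p - k)"
    using assms by (simp add: of_nat_diff)
  moreover have "fact p = (fact (p - k) :: complex) * pochhammer (1 + of_nat (p - k)) k"
    using pochhammer_product[of "p - k" p "1::complex"] assms by (simp add: pochhammer_fact)
  ultimately show ?thesis by simp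
qed

lemma step3_full:
  fixes a :: complex
  assumes a: "\<forall>i\<in>{0..<p}. a \<noteq> - of_nat i"
  shows "(\<Sum>K\<le>p. (-1)^K * pochhammer (of_nat q) K * pochhammer (a + of_nat K) (p-K) / (fact K * fact (p-K)))
       = pochhammer (a - of_nat q) p / fact p"
proof -
  have ap: "pochhammer a p \<noteq> 0"
    using a by (auto simp: pochhammer_eq_0_iff)
  have V: "(\<Sum>k\<in>{0..p}. (pochhammer (of_nat q) k * pochhammer (- (of_nat p)) k) /
    (of_nat (fact k) * pochhammer a k)) = pochhammer (a - of_nat q) p / pochhammer a p"
    by (rule Vandermonde_pochhammer[OF a])
  have "(\<Sum>K\<le>p. (-1)^K * pochhammer (of_nat q) K * pochhammer (a + of_nat K) (p-K) / (fact K * fact (p-K)))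
     = (\<Sum>k\<in>{0..p}. (pochhammer (of_nat q) k * pochhammer (- (of_nat p)) k) /
    (of_nat (fact k) * pochhammer a k)) * pochhammer a p / fact p"
    unfolding sum_distrib_right sum_divide_distrib atLeast0AtMost
  proof (rule sum.cong[OF refl])
    fix k assume k: "k \<in> {..p}"
    have e1: "pochhammer a p = pochhammer a k * pochhammer (a + of_nat k) (p - k)"
      using k by (intro pochhammer_product) auto
    have ak: "pochhammer a k \<noteq> 0" using ap e1 by auto
    show "(-1)^k * pochhammer (of_nat q) k * pochhammer (a + of_nat k) (p-k) / (fact k * fact (p-k))
      = (pochhammer (of_nat q) k * pochhammer (- (of_nat p)) k) /
    (of_nat (fact k) * pochhammer a k) * pochhammer a p / fact p"
      using k ak unfolding e1 poch_neg_nat[of k p, OF _] by (simp add: poch_neg_nat field_simps)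
  qed
  also have "\<dots> = pochhammer (a - of_nat q) p / fact p" using V ap by simp
  finally show ?thesis .
qed

lemma step3:
  fixes a :: complex
  assumes a: "\<forall>i\<in>{0..<p}. a \<noteq> - of_nat i"
  shows "(\<Sum>k<p. (-1)^(Suc k) * pochhammer (of_nat q) (Suc k) * pochhammer (a + of_nat (Suc k)) (p - Suc k) / (fact (Suc k) * fact (p - Suc k)))
       = (pochhammer (a - of_nat q) p - pochhammer a p) / fact p"
proof -
  define S where "S = (\<Sum>k<p. (-1)^(Suc k) * pochhammer (of_nat q) (Suc k) * pochhammer (a + of_nat (Suc k)) (p - Suc k) / (fact (Suc k) * fact (p - Suc k)) :: complex)"
  have H: "(-1)^0 * pochhammer (of_nat q) 0 * pochhammer (a + of_nat 0) (p-0) / (fact 0 * fact (p-0)) + S = pochhammer (a - of_nat q) p / fact p"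
    using step3_full[OF a, of q] unfolding lessThan_Suc_atMost[symmetric] sum.lessThan_Suc_shift S_def .
  have "S = pochhammer (a - of_nat q) p / fact p - pochhammer a p / fact p"
    using H by (simp add: eq_diff_eq add.commute)
  then show ?thesis unfolding S_def by (simp add: diff_divide_distrib)
qed




lemma poch_nz: "(z::complex) \<notin> \<int> \<Longrightarrow> pochhammer z n \<noteq> 0"
  by (auto simp: pochhammer_eq_0_iff)

lemma pint:
  assumes a: "(a::complex) \<notin> \<int>"
  shows "poch_int a (int p - int q) * pochhammer (1-a) q = (-1)^q * pochhammer (a - of_nat q) p"
proof -
  have m: "pochhammer (1-a) q = (-1)^q * pochhammer (a - of_nat q) q"
    using pochhammer_minus[of "a - 1" q] by simp
  show ?thesis
  proof (cases "q \<le> p")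
    case True
    have "pochhammer (a - of_nat q) p = pochhammer (a - of_nat q) q * pochhammer (a - of_nat q + of_nat q) (p - q)"
      using True by (rule pochhammer_product)
    then show ?thesis using True by (simp add: poch_int_def m nat_diff_distrib)
  next
    case False
    have e: "nat (- (int p - int q)) = q - p" using False by auto
    have e2: "a + of_int (int p - int q) = a - of_nat q + of_nat p" by simp
    have pr: "pochhammer (a - of_nat q) q = pochhammer (a - of_nat q) p * pochhammer (a - of_nat q + of_nat p) (q - p)"
      using False by (intro pochhammer_product) auto
    have "a - of_nat q + of_nat p \<notin> \<int>"
    proof
      assume "a - of_nat q + of_nat p \<in> \<int>"
      then have "a - of_nat q + of_nat p - of_nat p + of_nat q \<in> \<int>" by (intro Ints_add Ints_diff) auto
      then show False using a by simp
    qed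
    then have nz: "pochhammer (a - of_nat q + of_nat p) (q - p) \<noteq> 0" by (rule poch_nz)
    show ?thesis using False nz unfolding poch_int_def e e2 m pr by (simp add: field_simps)
  qed
qed




lemma alg:
  fixes s1 s2 s s' f g B1 B2 D1 D2 C1 C2 A1 A2 P F G :: complex
  assumes "s1*s2 = s*s'" "g \<noteq> 0" "D1 \<noteq> 0" "D2 \<noteq> 0" "A1 \<noteq> 0" "A2 \<noteq> 0" "F \<noteq> 0" "G \<noteq> 0"
  shows "(s1 * f / g * B1 * C1 / (A1 * D1)) * (P * B2 / (D2 * F)) * (s2 * (C2 / (A2 * G)))
     = (B1*B2) * (C1*C2) / ((D1*D2) * (A1*A2)) * s * (s' * P / F) * (f / (g * G))"
proof -
  have "(s1 * f / g * B1 * C1 / (A1 * D1)) * (P * B2 / (D2 * F)) * (s2 * (C2 / (A2 * G)))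
     = (s1*s2) * (f * B1 * C1 * P * B2 * C2) / (g * A1 * D1 * D2 * F * A2 * G)" by (simp add: ac_simps)
  also have "\<dots> = (s*s') * (f * B1 * C1 * P * B2 * C2) / (g * A1 * D1 * D2 * F * A2 * G)" using assms(1) by simp
  also have "\<dots> = (B1*B2) * (C1*C2) / ((D1*D2) * (A1*A2)) * s * (s' * P / F) * (f / (g * G))" by (simp add: ac_simps)
  finally show ?thesis .
qed

lemma term_eq:
  fixes a b c d :: complex
  assumes lq: "l \<le> q" and l1: "1 \<le> l" and lk: "l \<le> Suc k" and kp: "Suc k \<le> p"
    and dnz: "pochhammer d p \<noteq> 0" and anz: "pochhammer (1-a) q \<noteq> 0"
  shows "((-1) ^ (Suc k + l) * fact k / (fact (l - 1) * fact l * fact (Suc k - l))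
                    * pochhammer b (Suc k) * pochhammer c l
                    / (pochhammer (1 - a) l * pochhammer d (Suc k)))
         * (pochhammer (a + of_nat (Suc k)) (p - Suc k) * pochhammer (b + of_nat (Suc k)) (p - Suc k)
             / (pochhammer (d + of_nat (Suc k)) (p - Suc k) * fact (p - Suc k)))
         * ((-1)^(q-l) * (pochhammer (c + of_nat l) (q-l) / (pochhammer (1 - a + of_nat l) (q-l) * fact (q-l))))
    = pochhammer b p * pochhammer c q / (pochhammer d p * pochhammer (1-a) q) * (-1)^q
      * ((-1)^(Suc k) * pochhammer (a + of_nat (Suc k)) (p - Suc k) / fact (p - Suc k))
      * (fact k / (fact (l-1) * fact l * fact (Suc k - l) * fact (q-l)))"
proof -
  have pb: "pochhammer b p = pochhammer b (Suc k) * pochhammer (b + of_nat (Suc k)) (p - Suc k)"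
    using kp by (rule pochhammer_product)
  have pd: "pochhammer d p = pochhammer d (Suc k) * pochhammer (d + of_nat (Suc k)) (p - Suc k)"
    using kp by (rule pochhammer_product)
  have pc: "pochhammer c q = pochhammer c l * pochhammer (c + of_nat l) (q - l)"
    using lq by (rule pochhammer_product)
  have pa: "pochhammer (1-a) q = pochhammer (1-a) l * pochhammer (1 - a + of_nat l) (q - l)"
    using lq by (rule pochhammer_product)
  have sg: "(-1::complex) ^ (Suc k + l) * (-1)^(q-l) = (-1)^q * (-1)^(Suc k)"
  proof -
    have "(-1::complex) ^ (Suc k + l) * (-1)^(q-l) = (-1)^(Suc k + q)"
      using lq by (simp flip: power_add)
    then show ?thesis by (simp add: power_add)
  qed
  from dnz pd have d1: "pochhammer d (Suc k) \<noteq> 0" "pochhammer (d + of_nat (Suc k)) (p - Suc k) \<noteq> 0" by auto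
  from anz pa have a1: "pochhammer (1-a) l \<noteq> 0" "pochhammer (1 - a + of_nat l) (q - l) \<noteq> 0" by auto
  show ?thesis
    unfolding pb pd pc pa
    by (rule alg[OF sg]) (use d1 a1 in auto)
qed




lemma coeff_identity:
  fixes a b c d :: complex
  assumes a: "a \<notin> \<int>" and d: "d \<notin> \<int>\<^sub>\<le>\<^sub>0"
  shows "poch_int a (int p - int q) * pochhammer b p * pochhammer c q / (pochhammer d p * fact p * fact q)
   - (pochhammer a p * pochhammer b p / (pochhammer d p * fact p)) * ((-1)^q * (pochhammer c q / (pochhammer (1-a) q * fact q)))
  = (\<Sum>k<p. \<Sum>l=1..Suc k. if l \<le> q then
       ((-1) ^ (Suc k + l) * fact k / (fact (l - 1) * fact l * fact (Suc k - l))
                    * pochhammer b (Suc k) * pochhammer c l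
                    / (pochhammer (1 - a) l * pochhammer d (Suc k)))
         * (pochhammer (a + of_nat (Suc k)) (p - Suc k) * pochhammer (b + of_nat (Suc k)) (p - Suc k)
             / (pochhammer (d + of_nat (Suc k)) (p - Suc k) * fact (p - Suc k)))
         * ((-1)^(q-l) * (pochhammer (c + of_nat l) (q-l) / (pochhammer (1 - a + of_nat l) (q-l) * fact (q-l))))
       else 0)"
proof -
  have dnz: "pochhammer d p \<noteq> 0"
    using d by (auto simp: pochhammer_eq_0_iff)
  have "1 - a \<notin> \<int>"
  proof
    assume "1 - a \<in> \<int>" then have "1 - (1 - a) \<in> \<int>" by (intro Ints_diff) auto
    then show False using a by simp
  qed
  then have anz: "pochhammer (1-a) q \<noteq> 0" by (rule poch_nz)
  have acond: "\<forall>i\<in>{0..<p}. a \<noteq> - of_nat i"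
  proof
    fix i assume "i \<in> {0..<p}"
    have "- of_nat i \<in> (\<int>::complex set)" by (intro Ints_minus) auto
    then show "a \<noteq> - of_nat i" using a by auto
  qed
  define B where "B = pochhammer b p * pochhammer c q / (pochhammer d p * pochhammer (1-a) q)"
  let ?w = "\<lambda>k l. fact k / (fact (l-1) * fact l * fact (Suc k - l) * fact (q-l)) :: complex"
  let ?P = "\<lambda>k. (-1)^(Suc k) * pochhammer (a + of_nat (Suc k)) (p - Suc k) / fact (p - Suc k) :: complex"
  have "(\<Sum>k<p. \<Sum>l=1..Suc k. if l \<le> q then
       ((-1) ^ (Suc k + l) * fact k / (fact (l - 1) * fact l * fact (Suc k - l))
                    * pochhammer b (Suc k) * pochhammer c l
                    / (pochhammer (1 - a) l * pochhammer d (Suc k)))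
         * (pochhammer (a + of_nat (Suc k)) (p - Suc k) * pochhammer (b + of_nat (Suc k)) (p - Suc k)
             / (pochhammer (d + of_nat (Suc k)) (p - Suc k) * fact (p - Suc k)))
         * ((-1)^(q-l) * (pochhammer (c + of_nat l) (q-l) / (pochhammer (1 - a + of_nat l) (q-l) * fact (q-l))))
       else 0)
    = (\<Sum>k<p. B * (-1)^q * ?P k * (\<Sum>l=1..Suc k. if l \<le> q then ?w k l else 0))"
  proof (rule sum.cong[OF refl])
    fix k assume k: "k \<in> {..<p}"
    show "(\<Sum>l=1..Suc k. if l \<le> q then
       ((-1) ^ (Suc k + l) * fact k / (fact (l - 1) * fact l * fact (Suc k - l))
                    * pochhammer b (Suc k) * pochhammer c l
                    / (pochhammer (1 - a) l * pochhammer d (Suc k)))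
         * (pochhammer (a + of_nat (Suc k)) (p - Suc k) * pochhammer (b + of_nat (Suc k)) (p - Suc k)
             / (pochhammer (d + of_nat (Suc k)) (p - Suc k) * fact (p - Suc k)))
         * ((-1)^(q-l) * (pochhammer (c + of_nat l) (q-l) / (pochhammer (1 - a + of_nat l) (q-l) * fact (q-l))))
       else 0) = B * (-1)^q * ?P k * (\<Sum>l=1..Suc k. if l \<le> q then ?w k l else 0)"
      unfolding sum_distrib_left
    proof (rule sum.cong[OF refl])
      fix l assume l: "l \<in> {1..Suc k}"
      show "(if l \<le> q then
       ((-1) ^ (Suc k + l) * fact k / (fact (l - 1) * fact l * fact (Suc k - l))
                    * pochhammer b (Suc k) * pochhammer c l
                    / (pochhammer (1 - a) l * pochhammer d (Suc k)))
         * (pochhammer (a + of_nat (Suc k)) (p - Suc k) * pochhammer (b + of_nat (Suc k)) (p - Suc k)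
             / (pochhammer (d + of_nat (Suc k)) (p - Suc k) * fact (p - Suc k)))
         * ((-1)^(q-l) * (pochhammer (c + of_nat l) (q-l) / (pochhammer (1 - a + of_nat l) (q-l) * fact (q-l))))
       else 0) = B * (-1)^q * ?P k * (if l \<le> q then ?w k l else 0)"
      proof (cases "l \<le> q")
        case True
        show ?thesis using True term_eq[OF True _ _ _ dnz anz, of k b c] l k unfolding B_def by auto
      qed simp
    qed
  qed
  also have "\<dots> = (\<Sum>k<p. B * (-1)^q * ?P k * (pochhammer (of_nat q) (Suc k) / (fact (Suc k) * fact q)))"
    by (simp only: step2)
  also have "\<dots> = B * (-1)^q / fact q * (\<Sum>k<p. (-1)^(Suc k) * pochhammer (of_nat q) (Suc k) * pochhammer (a + of_nat (Suc k)) (p - Suc k) / (fact (Suc k) * fact (p - Suc k)))"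
    unfolding sum_distrib_left by (rule sum.cong) (auto simp: field_simps)
  also have "\<dots> = B * (-1)^q / fact q * ((pochhammer (a - of_nat q) p - pochhammer a p) / fact p)"
    by (simp only: step3[OF acond])
  also have "\<dots> = poch_int a (int p - int q) * pochhammer b p * pochhammer c q / (pochhammer d p * fact p * fact q)
   - (pochhammer a p * pochhammer b p / (pochhammer d p * fact p)) * ((-1)^q * (pochhammer c q / (pochhammer (1-a) q * fact q)))"
  proof -
    have pi: "poch_int a (int p - int q) = (-1)^q * pochhammer (a - of_nat q) p / pochhammer (1-a) q"
      using pint[OF a, of p q] anz by (simp add: field_simps)
    show ?thesis unfolding pi B_def using dnz anz by (simp add: field_simps)
  qed
  finally show ?thesis by simp
qed




lemma term_nth:
  "fps_nth (fps_nth (const2 C * X2^m * Y2^l * fps_in_x F * fps_in_y G) p) q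
     = (if m \<le> p \<and> l \<le> q then C * fps_nth F (p-m) * fps_nth G (q-l) else 0)"
proof -
  have e: "const2 C * X2^m * Y2^l * fps_in_x F * fps_in_y G
        = fps_X^m * (fps_in_x F * fps_const (fps_const C * fps_X^l * G))"
    by (simp add: fps_in_y_def mult_ac)
  have "fps_nth (fps_nth (fps_in_x F * fps_const (fps_const C * fps_X^l * G)) i) q
       = fps_nth F i * C * (if l \<le> q then fps_nth G (q - l) else 0)" for i
  proof -
    have eq: "fps_nth (fps_in_x F * fps_const (fps_const C * fps_X^l * G)) i
        = fps_const (fps_nth F i) * (fps_const C * (fps_X^l * G))"
      by (simp add: fps_in_x_def mult.assoc)
    show ?thesis unfolding eq fps_mult_left_const_nth by (simp add: fps_X_power_mult_nth)
  qed
  then show ?thesis unfolding e by (auto simp: fps_X_power_mult_nth)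
qed




theorem mainTheorem4:
  fixes a b c d :: complex
  assumes "a \<notin> \<int>" and "d \<notin> \<int>\<^sub>\<le>\<^sub>0"
  shows "(\<lambda>k. \<Sum>l = 1..Suc k.
            const2 ((-1) ^ (Suc k + l) * fact k / (fact (l - 1) * fact l * fact (Suc k - l))
                    * pochhammer b (Suc k) * pochhammer c l
                    / (pochhammer (1 - a) l * pochhammer d (Suc k)))
            * X2 ^ Suc k * Y2 ^ l
            * fps_in_x (hyp2F1 (a + of_nat (Suc k)) (b + of_nat (Suc k)) (d + of_nat (Suc k)))
            * fps_in_y (hyp1F1 (c + of_nat l) (1 - a + of_nat l) oo (- fps_X)))
         sums (H2 a b c d - fps_in_x (hyp2F1 a b d) * fps_in_y (hyp1F1 c (1 - a) oo (- fps_X)))"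
  (is "?T sums ?R")
proof -
  define C where "C = (\<lambda>k l. (-1) ^ (Suc k + l) * fact k / (fact (l - 1) * fact l * fact (Suc k - l))
                    * pochhammer b (Suc k) * pochhammer c l
                    / (pochhammer (1 - a) l * pochhammer d (Suc k)) :: complex)"
  define F where "F = (\<lambda>k. hyp2F1 (a + of_nat (Suc k)) (b + of_nat (Suc k)) (d + of_nat (Suc k)))"
  define G where "G = (\<lambda>l::nat. hyp1F1 (c + of_nat l) (1 - a + of_nat l) oo (- fps_X))"
  have Teq: "?T = (\<lambda>k. \<Sum>l = 1..Suc k. const2 (C k l) * X2 ^ Suc k * Y2 ^ l * fps_in_x (F k) * fps_in_y (G l))"
    unfolding C_def F_def G_def ..
  have Tnth: "fps_nth (fps_nth (?T k) p) q = (\<Sum>l=1..Suc k. if Suc k \<le> p \<and> l \<le> q then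
       C k l * fps_nth (F k) (p - Suc k) * fps_nth (G l) (q - l) else 0)" for k p q
    unfolding C_def F_def G_def by (simp only: fps_sum_nth term_nth)
  have T0: "fps_nth (?T k) p = 0" if "p \<le> k" for k p
    by (rule fps_ext) (use that in \<open>simp only: Tnth fps_zero_nth\<close>, simp)
  have Rnth: "fps_nth (fps_nth ?R p) q =
     poch_int a (int p - int q) * pochhammer b p * pochhammer c q / (pochhammer d p * fact p * fact q)
   - (pochhammer a p * pochhammer b p / (pochhammer d p * fact p)) * ((-1)^q * (pochhammer c q / (pochhammer (1-a) q * fact q)))" for p q
    by (simp add: H2_def fps_in_x_def fps_in_y_def hyp2F1_def hyp1F1_def fps_compose_uminus')
  have key: "fps_nth (\<Sum>k<p. ?T k) p = fps_nth ?R p" for p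
  proof (rule fps_ext)
    fix q
    have "fps_nth (fps_nth (\<Sum>k<p. ?T k) p) q = (\<Sum>k<p. fps_nth (fps_nth (?T k) p) q)"
      by (simp only: fps_sum_nth)
    also have "\<dots> = (\<Sum>k<p. \<Sum>l=1..Suc k. if l \<le> q then
       ((-1) ^ (Suc k + l) * fact k / (fact (l - 1) * fact l * fact (Suc k - l))
                    * pochhammer b (Suc k) * pochhammer c l
                    / (pochhammer (1 - a) l * pochhammer d (Suc k)))
         * (pochhammer (a + of_nat (Suc k)) (p - Suc k) * pochhammer (b + of_nat (Suc k)) (p - Suc k)
             / (pochhammer (d + of_nat (Suc k)) (p - Suc k) * fact (p - Suc k)))
         * ((-1)^(q-l) * (pochhammer (c + of_nat l) (q-l) / (pochhammer (1 - a + of_nat l) (q-l) * fact (q-l))))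
       else 0)"
      unfolding Tnth
      by (intro sum.cong refl) (auto simp: C_def F_def G_def hyp2F1_def hyp1F1_def fps_compose_uminus')
    also have "\<dots> = fps_nth (fps_nth ?R p) q"
      unfolding Rnth by (rule coeff_identity[OF assms, symmetric])
    finally show "fps_nth (fps_nth (\<Sum>k<p. ?T k) p) q = fps_nth (fps_nth ?R p) q" .
  qed
  show ?thesis
    unfolding sums_def
  proof (rule tendsto_fpsI)
    fix p
    show "\<forall>\<^sub>F n in sequentially. fps_nth (\<Sum>k<n. ?T k) p = fps_nth ?R p"
      unfolding eventually_sequentially
    proof (intro exI allI impI)
      fix n assume n: "p \<le> n"
      have "fps_nth (\<Sum>k<n. ?T k) p = (\<Sum>k<n. fps_nth (?T k) p)" by (simp only: fps_sum_nth)
      also have "\<dots> = (\<Sum>k<p. fps_nth (?T k) p)"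
        using n by (intro sum.mono_neutral_right ballI T0) auto
      also have "\<dots> = fps_nth (\<Sum>k<p. ?T k) p" by (simp only: fps_sum_nth)
      finally show "fps_nth (\<Sum>k<n. ?T k) p = fps_nth ?R p" using key by simp
    qed
  qed
qed


end
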